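(* Let $\mathcal{D}$ be a domain with area $|\mathcal{D}|>0$, and suppose we have $n_1$ presence observations with feature vectors $x_i\in\mathbb{R}^p$ (indexed by $y_i=1$) and $n_0\ge1$ background observations with feature vectors $x_i\in\mathbb{R}^p$ (indexed by $y_i=0$). Define the numerical IPP log-likelihood $$\ell_{\mathrm{IPP}}(\alpha,\beta)=\sum_{i:y_i=1}\big(\alpha+\beta'x_i\big)-\frac{|\mathcal{D}|}{n_0}\sum_{i:y_i=0}e^{\alpha+\beta'x_i}-\log n_1!,$$ and, for a weight $W>0$, the weighted logistic regression log-likelihood $$\ell_{\mathrm{WLR}}(\eta,\beta)=\sum_{i:y_i=1}\big(\eta+\beta'x_i\big)-\sum_{i}W^{1-y_i}\log\big(1+e^{\eta+\beta'x_i}\big),$$ where the last sum runs over all $n_1+n_0$ observations. Let $J(\beta)$ be any convex penalty, and suppose $\ell_{\mathrm{IPP}}(\alpha,\beta)-J(\beta)$ has a unique maximizer $(\hat\alpha_{\mathrm{IPP}},\hat\beta_{\mathrm{IPP}})$. If, for each $W$, $(\hat\eta_W,\hat\beta_W)$ maximizes $\ell_{\mathrm{WLR}}(\eta,\beta)-J(\beta)$, then $\lim_{W\to\infty}\hat\beta_W=\hat\beta_{\mathrm{IPP}}$.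
   Context: $\ell_{\mathrm{WLR}}$ is the log-likelihood of logistic regression of $y_i$ on $x_i$ in which every background observation ($y_i=0$) receives case weight $W$ and every presence observation receives weight $1$. *)

theory Defs
  imports "HOL-Analysis.Analysis"
begin

text \<open>Presence observations: x1 i for i < n1 (y_i = 1).
      Background observations: x0 j for j < n0 (y_i = 0).
      Feature space R^p is real^'p; beta' x is the inner product.\<close>

definition ell_IPP ::
  "real \<Rightarrow> nat \<Rightarrow> nat \<Rightarrow> (nat \<Rightarrow> real^'p) \<Rightarrow> (nat \<Rightarrow> real^'p) \<Rightarrow> real \<Rightarrow> real^'p \<Rightarrow> real" where
  "ell_IPP areaD n1 n0 x1 x0 \<alpha> \<beta> =
     (\<Sum>i<n1. \<alpha> + \<beta> \<bullet> x1 i)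
     - areaD / real n0 * (\<Sum>j<n0. exp (\<alpha> + \<beta> \<bullet> x0 j))
     - ln (fact n1)"

text \<open>Weighted logistic regression log-likelihood: every background point gets
      case weight W = W^(1-0), every presence point weight 1 = W^(1-1).\<close>
definition ell_WLR ::
  "real \<Rightarrow> nat \<Rightarrow> nat \<Rightarrow> (nat \<Rightarrow> real^'p) \<Rightarrow> (nat \<Rightarrow> real^'p) \<Rightarrow> real \<Rightarrow> real^'p \<Rightarrow> real" where
  "ell_WLR W n1 n0 x1 x0 \<eta> \<beta> =
     (\<Sum>i<n1. \<eta> + \<beta> \<bullet> x1 i)
     - ((\<Sum>i<n1. ln (1 + exp (\<eta> + \<beta> \<bullet> x1 i)))
        + (\<Sum>j<n0. W * ln (1 + exp (\<eta> + \<beta> \<bullet> x0 j))))"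

end

theory Submission
  imports Defs
begin

definition phi :: "real \<Rightarrow> real" where "phi x = ln (1 + exp x)"

lemma phi_convex: "convex_on UNIV phi"
proof (rule convex_on_realI[where f' = "\<lambda>x. exp x / (1 + exp x)"])
  show "connected (UNIV::real set)" by simp
  fix x :: real
  show "(phi has_real_derivative exp x / (1 + exp x)) (at x)"
    unfolding phi_def
    by (auto intro!: derivative_eq_intros simp: add_pos_pos)
next
  fix x y :: real assume "x \<le> y"
  have "exp x \<le> exp y" using \<open>x \<le> y\<close> by simp
  then show "exp x / (1 + exp x) \<le> exp y / (1 + exp y)"
  proof -
    have nx: "1 + exp x \<noteq> 0" by (smt (verit) exp_gt_zero)
    have "exp x / (1 + exp x) = 1 - 1 / (1 + exp x)" using nx by (simp add: field_simps)
    moreover have ny: "1 + exp y \<noteq> 0" by (smt (verit) exp_gt_zero)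
    moreover have "exp y / (1 + exp y) = 1 - 1 / (1 + exp y)" using ny by (simp add: field_simps)
    moreover have "1 / (1 + exp y) \<le> 1 / (1 + exp x)"
      by (rule divide_left_mono) (use \<open>exp x \<le> exp y\<close> in \<open>auto intro!: mult_pos_pos add_pos_pos\<close>)
    ultimately show ?thesis by simp
  qed
qed

lemma phi_ineq: "0 \<le> u \<Longrightarrow> u \<le> 1 \<Longrightarrow> phi ((1-u)*a + u*b) \<le> (1-u) * phi a + u * phi b"
  using convex_onD[OF phi_convex, of u a b] by simp

lemma lin_comb: "fst ((1-u) *\<^sub>R c + u *\<^sub>R z) - k + snd ((1-u) *\<^sub>R c + u *\<^sub>R z) \<bullet> (x::real^'p)
   = (1-u) * (fst c - k + snd c \<bullet> x) + u * (fst z - k + snd z \<bullet> x)"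
  by (simp add: inner_add_left algebra_simps)


lemma Q_concave:
  fixes x1 x0 :: "nat \<Rightarrow> real^'p" and J :: "real^'p \<Rightarrow> real" and k :: real and n1 n0 :: nat
  assumes W: "W \<ge> 0" and J: "convex_on UNIV J" and u: "0 \<le> u" "u \<le> 1"
  defines "Q \<equiv> \<lambda>z. ell_WLR W n1 n0 x1 x0 (fst z - k) (snd z) - J (snd z)"
  shows "Q ((1-u) *\<^sub>R c + u *\<^sub>R z) \<ge> (1-u) * Q c + u * Q z"
proof -
  let ?p = "(1-u) *\<^sub>R c + u *\<^sub>R z"
  define A where "A = (\<lambda>x::real^'p. fst c - k + snd c \<bullet> x)"
  define B where "B = (\<lambda>x::real^'p. fst z - k + snd z \<bullet> x)"
  have L: "\<And>x. fst ?p - k + snd ?p \<bullet> x = (1-u) * A x + u * B x"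
    unfolding A_def B_def by (rule lin_comb)
  have s1: "(\<Sum>i<n1. fst ?p - k + snd ?p \<bullet> x1 i) = (1-u) * (\<Sum>i<n1. A (x1 i)) + u * (\<Sum>i<n1. B (x1 i))"
    by (simp only: L sum.distrib sum_distrib_left)
  have s2: "(\<Sum>i<n1. ln (1 + exp (fst ?p - k + snd ?p \<bullet> x1 i))) \<le> (1-u) * (\<Sum>i<n1. phi (A (x1 i))) + u * (\<Sum>i<n1. phi (B (x1 i)))"
    unfolding L phi_def[symmetric] sum_distrib_left sum.distrib[symmetric]
    by (rule sum_mono) (rule phi_ineq[OF u])
  have s3: "(\<Sum>j<n0. W * ln (1 + exp (fst ?p - k + snd ?p \<bullet> x0 j))) \<le> (1-u) * (\<Sum>j<n0. W * phi (A (x0 j))) + u * (\<Sum>j<n0. W * phi (B (x0 j)))"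
    unfolding L phi_def[symmetric] sum_distrib_left sum.distrib[symmetric]
  proof (rule sum_mono)
    fix j
    have "W * phi ((1 - u) * A (x0 j) + u * B (x0 j)) \<le> W * ((1-u) * phi (A (x0 j)) + u * phi (B (x0 j)))"
      by (rule mult_left_mono[OF phi_ineq[OF u] W])
    then show "W * phi ((1 - u) * A (x0 j) + u * B (x0 j)) \<le> (1 - u) * (W * phi (A (x0 j))) + u * (W * phi (B (x0 j)))"
      by (simp add: algebra_simps)
  qed
  have s4: "J (snd ?p) \<le> (1-u) * J (snd c) + u * J (snd z)"
    using convex_onD[OF J, of u "snd c" "snd z"] u by simp
  have Qc: "Q c = (\<Sum>i<n1. A (x1 i)) - ((\<Sum>i<n1. phi (A (x1 i))) + (\<Sum>j<n0. W * phi (A (x0 j)))) - J (snd c)"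
    unfolding Q_def ell_WLR_def A_def phi_def by simp
  have Qz: "Q z = (\<Sum>i<n1. B (x1 i)) - ((\<Sum>i<n1. phi (B (x1 i))) + (\<Sum>j<n0. W * phi (B (x0 j)))) - J (snd z)"
    unfolding Q_def ell_WLR_def B_def phi_def by simp
  have Qp: "Q ?p = (\<Sum>i<n1. fst ?p - k + snd ?p \<bullet> x1 i) - ((\<Sum>i<n1. ln (1 + exp (fst ?p - k + snd ?p \<bullet> x1 i))) + (\<Sum>j<n0. W * ln (1 + exp (fst ?p - k + snd ?p \<bullet> x0 j)))) - J (snd ?p)"
    unfolding Q_def ell_WLR_def by (simp add: add_diff_eq)
  show ?thesis unfolding Qp Qc Qz s1 using s2 s3 s4 by (simp add: algebra_simps)
qed


lemma err_bound:
  fixes x1 x0 :: "nat \<Rightarrow> real^'p" and n1 n0 :: nat and D W M :: real and z :: "real \<times> (real^'p)"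
  assumes D: "D > 0" and n0: "n0 \<ge> 1" and W: "W > 0"
    and b1: "\<And>i. i < n1 \<Longrightarrow> \<bar>fst z + snd z \<bullet> x1 i\<bar> \<le> M"
    and b0: "\<And>j. j < n0 \<Longrightarrow> \<bar>fst z + snd z \<bullet> x0 j\<bar> \<le> M"
    and eps: "D / (W * n0) * exp M \<le> 1"
  shows "\<bar>ell_WLR W n1 n0 x1 x0 (fst z - ln (W * n0 / D)) (snd z) + n1 * ln (W * n0 / D) - ln (fact n1)
          - ell_IPP D n1 n0 x1 x0 (fst z) (snd z)\<bar> \<le> D / (W * n0) * (n1 * exp M + D * exp (2*M))"
proof -
  define k where "k = ln (W * n0 / D)"
  define e where "e = D / (W * n0)"
  have n0p: "real n0 > 0" using n0 by simp
  have ep: "e > 0" unfolding e_def using D W n0p by simp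
  have ek: "exp k = 1 / e" unfolding k_def e_def using D W n0p by simp
  have ex: "\<And>t. exp (t - k) = e * exp t" using ek ep by (simp add: exp_diff field_simps)
  have We: "W * e = D / n0" unfolding e_def using W by simp
  define T where "T = (\<lambda>i. fst z + snd z \<bullet> x1 i)"
  define S where "S = (\<lambda>j. fst z + snd z \<bullet> x0 j)"
  have lin: "\<And>x. fst z - k + snd z \<bullet> x = (fst z + snd z \<bullet> x) - k" by simp
  define S1 where "S1 = (\<Sum>i<n1. ln (1 + e * exp (T i)))"
  define S2 where "S2 = (\<Sum>j<n0. W * ln (1 + e * exp (S j)) - D / n0 * exp (S j))"
  have eq: "ell_WLR W n1 n0 x1 x0 (fst z - k) (snd z) + n1 * k - ln (fact n1)
          - ell_IPP D n1 n0 x1 x0 (fst z) (snd z) = - S1 - S2"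
    unfolding ell_WLR_def ell_IPP_def S1_def S2_def lin ex T_def S_def
    by (simp add: sum_subtractf sum_distrib_left algebra_simps)
  have S1u: "S1 \<le> n1 * (e * exp M)"
  proof -
    have "S1 \<le> (\<Sum>i<n1. e * exp M)" unfolding S1_def
    proof (rule sum_mono)
      fix i assume "i \<in> {..<n1}"
      then have "T i \<le> M" using b1 unfolding T_def by fastforce
      then have "e * exp (T i) \<le> e * exp M" using ep by simp
      moreover have "ln (1 + e * exp (T i)) \<le> e * exp (T i)"
        by (rule ln_add_one_self_le_self) (use ep in simp)
      ultimately show "ln (1 + e * exp (T i)) \<le> e * exp M" by linarith
    qed
    then show ?thesis by simp
  qed
  have S1l: "S1 \<ge> 0" unfolding S1_def
    by (rule sum_nonneg) (use ep in simp)
  have S2u: "S2 \<le> 0" unfolding S2_def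
  proof (rule sum_nonpos)
    fix j
    have "ln (1 + e * exp (S j)) \<le> e * exp (S j)"
      by (rule ln_add_one_self_le_self) (use ep in simp)
    then have "W * ln (1 + e * exp (S j)) \<le> W * (e * exp (S j))" using W by simp
    then show "W * ln (1 + e * exp (S j)) - D / n0 * exp (S j) \<le> 0"
      using We by (simp add: mult.assoc[symmetric])
  qed
  have S2l: "S2 \<ge> - (n0 * (D / n0 * e * exp (2*M)))"
  proof -
    have "(\<Sum>j<n0. - (D / n0 * e * exp (2*M))) \<le> S2" unfolding S2_def
    proof (rule sum_mono)
      fix j assume "j \<in> {..<n0}"
      then have SM: "S j \<le> M" using b0 unfolding S_def by fastforce
      define y where "y = e * exp (S j)"
      have y0: "0 \<le> y" unfolding y_def using ep by simp
      have "y \<le> e * exp M" unfolding y_def using SM ep by simp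
      then have y1: "y \<le> 1" using eps unfolding e_def by linarith
      have "y - y\<^sup>2 \<le> ln (1 + y)" by (rule ln_one_plus_pos_lower_bound[OF y0 y1])
      then have "W * (y - y\<^sup>2) \<le> W * ln (1 + y)" using W by simp
      moreover have "W * y = D / n0 * exp (S j)" unfolding y_def using We by (simp add: mult.assoc[symmetric])
      moreover have "W * y\<^sup>2 = D / n0 * e * exp (2 * S j)"
        unfolding y_def power2_eq_square using We
        by (simp add: exp_add[symmetric] mult.assoc[symmetric])
      moreover have "exp (2 * S j) \<le> exp (2 * M)" using SM by simp
      moreover have "D / n0 * e \<ge> 0" using D ep by simp
      ultimately have "W * ln (1 + y) - D / n0 * exp (S j) \<ge> - (D / n0 * e * exp (2*M))"
        by (smt (verit) mult_left_mono right_diff_distrib)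
      then show "- (D / n0 * e * exp (2*M)) \<le> W * ln (1 + e * exp (S j)) - D / n0 * exp (S j)"
        unfolding y_def .
    qed
    then show ?thesis by simp
  qed
  have "n0 * (D / n0 * e * exp (2*M)) = e * (D * exp (2*M))" using n0p by simp
  then have "\<bar>- S1 - S2\<bar> \<le> e * (n1 * exp M + D * exp (2*M))"
    using S1u S1l S2u S2l ep D by (simp add: algebra_simps abs_le_iff) 
  then show ?thesis using eq unfolding k_def e_def by simp
qed


lemma lin_bound:
  fixes z c :: "real \<times> (real^'p)" and x :: "real^'p"
  assumes "dist z c \<le> r" "norm x \<le> Mx"
  shows "\<bar>fst z + snd z \<bullet> x\<bar> \<le> (\<bar>fst c\<bar> + r) + (norm (snd c) + r) * Mx"
proof -
  have "dist (fst z) (fst c) \<le> r" using dist_fst_le[of z c] assms(1) by linarith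
  then have a: "\<bar>fst z\<bar> \<le> \<bar>fst c\<bar> + r" by (simp add: dist_real_def)
  have "dist (snd z) (snd c) \<le> r" using dist_snd_le[of z c] assms(1) by linarith
  then have b: "norm (snd z) \<le> norm (snd c) + r" using norm_triangle_ineq2[of "snd z" "snd c"]
    by (simp add: dist_norm)
  have "\<bar>snd z \<bullet> x\<bar> \<le> norm (snd z) * norm x" by (rule Cauchy_Schwarz_ineq2)
  also have "\<dots> \<le> (norm (snd c) + r) * Mx"
    by (rule mult_mono) (use norm_ge_zero[of "snd z"] norm_ge_zero[of x] b assms(2) in linarith)+
  finally show ?thesis using a by linarith
qed

lemma sphere_gap:
  fixes g :: "real \<times> (real^'p) \<Rightarrow> real"
  assumes cont: "continuous_on UNIV g" and r: "r > 0"
    and uniq: "\<And>z. z \<noteq> c \<Longrightarrow> g z < g c"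
  shows "\<exists>d>0. \<forall>p\<in>sphere c r. g p \<le> g c - d"
proof (cases "sphere c r = {}")
  case True then show ?thesis by (intro exI[of _ 1]) auto
next
  case False
  obtain p0 where p0: "p0 \<in> sphere c r" "\<And>p. p \<in> sphere c r \<Longrightarrow> g p \<le> g p0"
    using compact_attains_sup[OF compact_continuous_image[OF continuous_on_subset[OF cont] compact_sphere] ] False
    by (metis (no_types, lifting) compact_sphere continuous_attains_sup continuous_on_subset cont subset_UNIV)
  have "p0 \<noteq> c" using p0(1) r by auto
  then have "g p0 < g c" by (rule uniq)
  then show ?thesis using p0 by (intro exI[of _ "g c - g p0"]) auto
qed


theorem proposition2:
  fixes areaD :: real and n1 n0 :: nat
    and x1 x0 :: "nat \<Rightarrow> real^'p"
    and J :: "real^'p \<Rightarrow> real"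
    and \<alpha>hat :: real and \<beta>hat :: "real^'p"
    and \<eta>W :: "real \<Rightarrow> real" and \<beta>W :: "real \<Rightarrow> real^'p"
  assumes "areaD > 0" and "n0 \<ge> 1"
    and "convex_on UNIV J"
    and "\<forall>\<alpha> \<beta>. (\<alpha>, \<beta>) \<noteq> (\<alpha>hat, \<beta>hat) \<longrightarrow>
           ell_IPP areaD n1 n0 x1 x0 \<alpha> \<beta> - J \<beta> < ell_IPP areaD n1 n0 x1 x0 \<alpha>hat \<beta>hat - J \<beta>hat"
    and "\<forall>W>0. \<forall>\<eta> \<beta>. ell_WLR W n1 n0 x1 x0 \<eta> \<beta> - J \<beta>
           \<le> ell_WLR W n1 n0 x1 x0 (\<eta>W W) (\<beta>W W) - J (\<beta>W W)"
  shows "(\<beta>W \<longlongrightarrow> \<beta>hat) at_top"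
proof -
  note D = assms(1) and n0 = assms(2) and J = assms(3) and uniq0 = assms(4) and maxW = assms(5)
  define D where "D = areaD"
  have Dp: "D > 0" using D unfolding D_def .
  have n0p: "real n0 > 0" using n0 by simp
  define c :: "real \<times> (real^'p)" where "c = (\<alpha>hat, \<beta>hat)"
  define g where "g = (\<lambda>z::real \<times> (real^'p). ell_IPP D n1 n0 x1 x0 (fst z) (snd z) - J (snd z))"
  have Jc: "continuous_on UNIV J" by (rule convex_on_continuous[OF open_UNIV J])
  have Jc2: "continuous_on UNIV (\<lambda>z::real \<times> (real^'p). J (snd z))"
    by (rule continuous_on_compose2[OF Jc continuous_on_snd]) auto
  have gc: "continuous_on UNIV g"
    unfolding g_def ell_IPP_def by (intro continuous_intros Jc2)
  have uniq: "\<And>z. z \<noteq> c \<Longrightarrow> g z < g c"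
    using uniq0 unfolding g_def c_def D_def by (metis prod.collapse fst_conv snd_conv)
  define Mx where "Mx = (\<Sum>i<n1. norm (x1 i)) + (\<Sum>j<n0. norm (x0 j))"
  have Mx1: "\<And>i. i < n1 \<Longrightarrow> norm (x1 i) \<le> Mx"
  proof -
    fix i assume "i < n1"
    then have "norm (x1 i) \<le> (\<Sum>i<n1. norm (x1 i))"
      by (intro member_le_sum) auto
    moreover have "0 \<le> (\<Sum>j<n0. norm (x0 j))" by (intro sum_nonneg) auto
    ultimately show "norm (x1 i) \<le> Mx" unfolding Mx_def by linarith
  qed
  have Mx0: "\<And>j. j < n0 \<Longrightarrow> norm (x0 j) \<le> Mx"
  proof -
    fix j assume "j < n0"
    then have "norm (x0 j) \<le> (\<Sum>j<n0. norm (x0 j))"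
      by (intro member_le_sum) auto
    moreover have "0 \<le> (\<Sum>i<n1. norm (x1 i))" by (intro sum_nonneg) auto
    ultimately show "norm (x0 j) \<le> Mx" unfolding Mx_def by linarith
  qed
  show ?thesis
    unfolding tendsto_iff
  proof (intro allI impI)
    fix r :: real assume r: "r > 0"
    obtain d where d: "d > 0" "\<And>p. p \<in> sphere c r \<Longrightarrow> g p \<le> g c - d"
      using sphere_gap[OF gc r uniq] by blast
    define M where "M = (\<bar>fst c\<bar> + r) + (norm (snd c) + r) * Mx"
    define C where "C = n1 * exp M + D * exp (2*M)"
    have C0: "C \<ge> 0" unfolding C_def using Dp by simp
    define t where "t = min (1 / exp M) (d / (2 * (C + 1)))"
    have tp: "t > 0" unfolding t_def using d C0 by simp
    have ev: "eventually (\<lambda>W. W > max 1 (D / (n0 * t))) at_top" by (rule eventually_gt_at_top)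
    show "eventually (\<lambda>W. dist (\<beta>W W) \<beta>hat < r) at_top"
    proof (rule eventually_mono[OF ev])
      fix W assume W: "W > max 1 (D / (n0 * t))"
      have Wp: "W > 0" using W by simp
      define e where "e = D / (W * n0)"
      have ep: "e > 0" unfolding e_def using Dp Wp n0p by simp
      have "D / (n0 * t) < W" using W by simp
      then have "D < W * (n0 * t)" using tp n0p by (simp add: divide_less_eq mult.commute)
      then have et: "e < t" unfolding e_def using Wp n0p tp by (simp add: divide_less_eq algebra_simps)
      have eM: "e * exp M \<le> 1"
      proof -
        have "e \<le> 1 / exp M" using et unfolding t_def by linarith
        then show ?thesis by (simp add: field_simps)
      qed
      have eC: "e * C < d / 2"
      proof -
        have "e < d / (2 * (C + 1))" using et unfolding t_def by linarith
        then have "e * (C + 1) < d / 2" using C0 by (simp add: field_simps)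
        moreover have "e * C \<le> e * (C + 1)" using ep by simp
        ultimately show ?thesis by linarith
      qed
      define k where "k = ln (W * n0 / D)"
      define K where "K = n1 * k - ln (fact n1)"
      define h where "h = (\<lambda>z::real \<times> (real^'p). ell_WLR W n1 n0 x1 x0 (fst z - k) (snd z) - J (snd z))"
      have close: "\<And>z. dist z c \<le> r \<Longrightarrow> \<bar>h z + K - g z\<bar> < d / 2"
      proof -
        fix z assume dz: "dist z c \<le> r"
        have "\<bar>ell_WLR W n1 n0 x1 x0 (fst z - ln (W * n0 / D)) (snd z) + n1 * ln (W * n0 / D) - ln (fact n1)
          - ell_IPP D n1 n0 x1 x0 (fst z) (snd z)\<bar> \<le> D / (W * n0) * (n1 * exp M + D * exp (2*M))"
          apply (rule err_bound[OF Dp n0 Wp])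
          using lin_bound[OF dz Mx1] lin_bound[OF dz Mx0] eM unfolding M_def e_def by auto
        moreover have "h z + K - g z = ell_WLR W n1 n0 x1 x0 (fst z - ln (W * n0 / D)) (snd z) + n1 * ln (W * n0 / D) - ln (fact n1)
          - ell_IPP D n1 n0 x1 x0 (fst z) (snd z)" unfolding h_def K_def g_def k_def by simp
        moreover have "e * C = D / (W * n0) * (n1 * exp M + D * exp (2*M))" unfolding e_def C_def ..
        ultimately show "\<bar>h z + K - g z\<bar> < d / 2" using eC by linarith
      qed
      define zW where "zW = (\<eta>W W + k, \<beta>W W)"
      have hmax: "\<And>z. h z \<le> h zW"
        using maxW Wp unfolding h_def zW_def by simp
      have sph: "\<And>p. p \<in> sphere c r \<Longrightarrow> h p < h c"
      proof -
        fix p assume p: "p \<in> sphere c r"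
        have "dist p c \<le> r" using p by (simp add: dist_commute)
        then have "h p + K < g p + d / 2" using close[of p] by linarith
        also have "\<dots> \<le> g c - d / 2" using d(2)[OF p] by simp
        also have "\<dots> < h c + K" using close[of c] r abs_less_iff[of "h c + K - g c" "d/2"] by simp
        finally show "h p < h c" by simp
      qed
      have "dist zW c < r"
      proof (rule ccontr)
        assume "\<not> dist zW c < r"
        then have dge: "dist zW c \<ge> r" by simp
        define u where "u = r / dist zW c"
        have u0: "0 \<le> u" "u \<le> 1" unfolding u_def using r dge by (auto simp: divide_le_eq)
        define p where "p = (1-u) *\<^sub>R c + u *\<^sub>R zW"
        have "p - c = u *\<^sub>R (zW - c)" unfolding p_def by (simp add: algebra_simps)
        then have "dist p c = u * dist zW c" by (simp add: dist_norm u0)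
        moreover have "dist zW c > 0" using r dge by linarith
        ultimately have "dist p c = r" unfolding u_def by simp
        then have pin: "p \<in> sphere c r" by (simp add: dist_commute)
        have "h p \<ge> (1-u) * h c + u * h zW"
          unfolding p_def h_def by (rule Q_concave[OF _ J u0]) (use Wp in simp)
        moreover have "(1-u) * h c + u * h zW \<ge> h c"
        proof -
          have "u * (h zW - h c) \<ge> 0" using hmax[of c] u0 by simp
          then show ?thesis by (simp add: algebra_simps)
        qed
        ultimately show False using sph[OF pin] by simp
      qed
      then show "dist (\<beta>W W) \<beta>hat < r"
        using dist_snd_le[of zW c] unfolding zW_def c_def by simp
    qed
  qed
qed

end
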